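(* Let $h:[0,\infty)\to[0,\infty)$ be a super-multiplicative function, i.e. $h(xy)\ge h(x)h(y)$ for all $x,y\ge 0$, such that $h(t)\ge t$ for all $t\ge0$. Let $f:[a,b]\to\mathbb{R}$ be $h$-mid-convex, i.e. $$f\Big(\frac{x+y}{2}\Big)\le h\Big(\frac12\Big)\big(f(x)+f(y)\big)\quad\text{for all } x,y\in[a,b].$$ Then for every $n\in\mathbb{N}$, all $x_1,\dots,x_n\in[a,b]$ and all rational numbers $\lambda_1,\dots,\lambda_n\in\mathbb{Q}\cap[0,1]$ with $\sum_{i=1}^n\lambda_i=1$, $$f\Big(\sum_{i=1}^n\lambda_ix_i\Big)\le\sum_{i=1}^n h(\lambda_i)f(x_i).$$
   Context: The paper writes $h:\mathbb{R}^+\to\mathbb{R}^+$; here $\mathbb{R}^+$ is taken to be $[0,\infty)$. *)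

theory Defs
  imports "HOL-Analysis.Analysis"
begin

end

theory Submission
  imports Defs
begin

lemma two_point:
  fixes f :: "real \<Rightarrow> real" and a b u v t :: real
  assumes mid: "\<And>u v. u \<in> {a..b} \<Longrightarrow> v \<in> {a..b} \<Longrightarrow> f ((u + v) / 2) \<le> (f u + f v) / 2"
    and u: "u \<in> {a..b}" and v: "v \<in> {a..b}" and tq: "t \<in> \<rat>" and t0: "0 \<le> t" and t1: "t \<le> 1"
  shows "f (t * u + (1 - t) * v) \<le> t * f u + (1 - t) * f v"
proof -
  obtain p q :: nat where q0: "q \<noteq> 0" and tpq: "\<bar>t\<bar> = real p / real q"
    using Rats_abs_nat_div_natE[OF tq] by metis
  have tpq': "t = real p / real q" using tpq t0 by simp
  have pq: "p \<le> q" using t1 tpq' q0 by (simp add: divide_le_eq_1)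
  define P where "P k = (real k / real q) * u + (1 - real k / real q) * v" for k :: nat
  define d where "d k = f (P k) - (real k / real q * f u + (1 - real k / real q) * f v)" for k :: nat
  have Pin: "P k \<in> {a..b}" if "k \<le> q" for k
  proof -
    define s where "s = real k / real q"
    have s0: "0 \<le> s" and s1: "s \<le> 1" using that q0 by (auto simp: s_def divide_le_eq_1)
    have "s * a \<le> s * u" "(1 - s) * a \<le> (1 - s) * v" "s * u \<le> s * b" "(1 - s) * v \<le> (1 - s) * b"
      using u v s0 s1 by (auto intro: mult_left_mono)
    then show ?thesis unfolding P_def s_def[symmetric] by (auto simp: algebra_simps)
  qed
  have dmid: "d k \<le> (d (k - 1) + d (k + 1)) / 2" if "0 < k" "k < q" for k
  proof -
    have e: "P k = (P (k - 1) + P (k + 1)) / 2"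
      using that by (simp add: P_def of_nat_diff field_simps)
    have "f (P k) \<le> (f (P (k - 1)) + f (P (k + 1))) / 2"
      unfolding e by (rule mid) (use Pin that in auto)
    have r: "real k / real q = (real (k - 1) / real q + real (k + 1) / real q) / 2"
      using that by (simp add: of_nat_diff field_simps)
    have r1: "real k / real q * f u = (real (k - 1) / real q * f u + real (k + 1) / real q * f u) / 2"
      by (subst r) (simp add: field_simps)
    have r2: "real k / real q * f v = (real (k - 1) / real q * f v + real (k + 1) / real q * f v) / 2"
      by (subst r) (simp add: field_simps)
    show ?thesis unfolding d_def using r1 r2 \<open>f (P k) \<le> _\<close> by (simp add: algebra_simps)
  qed
  have d0: "d 0 = 0" by (simp add: d_def P_def)
  have dq: "d q = 0" using q0 by (simp add: d_def P_def)
  define M where "M = Max (d ` {..q})"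
  have Mmax: "d k \<le> M" if "k \<le> q" for k using that unfolding M_def by auto
  have "M \<in> d ` {..q}" unfolding M_def by (rule Max_in) auto
  then obtain k1 where k1: "k1 \<le> q" "d k1 = M" by auto
  define k0 where "k0 = (LEAST k. k \<le> q \<and> d k = M)"
  have k0: "k0 \<le> q \<and> d k0 = M" unfolding k0_def by (rule LeastI[of _ k1]) (use k1 in auto)
  have M0: "M \<le> 0"
  proof (rule ccontr)
    assume "\<not> M \<le> 0"
    then have "k0 \<noteq> 0" "k0 \<noteq> q" using k0 d0 dq by (metis order.refl)+
    then have kk: "0 < k0" "k0 < q" using k0 by (auto simp: le_less)
    have "\<not> (k0 - 1 \<le> q \<and> d (k0 - 1) = M)"
      unfolding k0_def by (rule not_less_Least) (use kk in \<open>simp add: k0_def[symmetric]\<close>)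
    then have "d (k0 - 1) < M" using Mmax[of "k0 - 1"] kk by force
    moreover have "d (k0 + 1) \<le> M" using Mmax kk by auto
    ultimately show False using dmid[OF kk] conjunct2[OF k0] by (simp add: field_simps)
  qed
  have "d p \<le> 0" using Mmax[OF pq] M0 by linarith
  then show ?thesis unfolding d_def P_def tpq'[symmetric] by simp
qed

lemma jensen_rat:
  fixes f :: "real \<Rightarrow> real" and a b :: real and n :: nat
  assumes mid: "\<And>u v. u \<in> {a..b} \<Longrightarrow> v \<in> {a..b} \<Longrightarrow> f ((u + v) / 2) \<le> (f u + f v) / 2"
  shows "\<forall>x lam. (\<forall>i\<in>{1..n}. x i \<in> {a..b} \<and> lam i \<in> \<rat> \<and> 0 \<le> lam i) \<longrightarrow> (\<Sum>i=1..n. lam i) = 1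
     \<longrightarrow> (\<Sum>i=1..n. lam i * x i) \<in> {a..b} \<and> f (\<Sum>i=1..n. lam i * x i) \<le> (\<Sum>i=1..n. lam i * f (x i))"
proof (induction n)
  case 0
  then show ?case by simp
next
  case (Suc n)
  show ?case
  proof (intro allI impI)
    fix x lam :: "nat \<Rightarrow> real"
    assume H: "\<forall>i\<in>{1..Suc n}. x i \<in> {a..b} \<and> lam i \<in> \<rat> \<and> 0 \<le> lam i"
      and S: "(\<Sum>i=1..Suc n. lam i) = 1"
    have S': "(\<Sum>i=1..n. lam i) + lam (Suc n) = 1" using S by simp
    have nn: "0 \<le> lam i" if "i \<in> {1..n}" for i using H that by auto
    have sn: "0 \<le> (\<Sum>i=1..n. lam i)" using nn by (intro sum_nonneg) auto
    have xl: "x (Suc n) \<in> {a..b}" "lam (Suc n) \<in> \<rat>" "0 \<le> lam (Suc n)" using H by auto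
    show "(\<Sum>i=1..Suc n. lam i * x i) \<in> {a..b} \<and> f (\<Sum>i=1..Suc n. lam i * x i) \<le> (\<Sum>i=1..Suc n. lam i * f (x i))"
    proof (cases "lam (Suc n) = 1")
      case True
      then have "(\<Sum>i=1..n. lam i) = 0" using S' by simp
      then have z: "\<forall>i\<in>{1..n}. lam i = 0" using sum_nonneg_eq_0_iff[of "{1..n}" lam] nn by auto
      have "(\<Sum>i=1..n. lam i * x i) = 0" "(\<Sum>i=1..n. lam i * f (x i)) = 0" using z by auto
      then show ?thesis using True xl by simp
    next
      case False
      define s where "s = 1 - lam (Suc n)"
      have s_eq: "s = (\<Sum>i=1..n. lam i)" using S' s_def by simp
      have spos: "0 < s" using False sn s_eq S' by linarith
      define mu where "mu i = lam i / s" for i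
      have "\<forall>i\<in>{1..n}. x i \<in> {a..b} \<and> mu i \<in> \<rat> \<and> 0 \<le> mu i"
      proof
        fix i assume i: "i \<in> {1..n}"
        have "s \<in> \<rat>" unfolding s_def using xl by simp
        then show "x i \<in> {a..b} \<and> mu i \<in> \<rat> \<and> 0 \<le> mu i" using H i spos by (auto simp: mu_def)
      qed
      moreover have "(\<Sum>i=1..n. mu i) = 1" unfolding mu_def using spos s_eq
        by (simp add: sum_divide_distrib[symmetric])
      ultimately have IH: "(\<Sum>i=1..n. mu i * x i) \<in> {a..b} \<and> f (\<Sum>i=1..n. mu i * x i) \<le> (\<Sum>i=1..n. mu i * f (x i))"
        using Suc.IH by blast
      define y where "y = (\<Sum>i=1..n. mu i * x i)"
      have e1: "(\<Sum>i=1..Suc n. lam i * x i) = s * y + (1 - s) * x (Suc n)"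
        using spos by (simp add: y_def mu_def sum_distrib_left s_def)
      have e2: "(\<Sum>i=1..Suc n. lam i * f (x i)) = s * (\<Sum>i=1..n. mu i * f (x i)) + (1 - s) * f (x (Suc n))"
        using spos by (simp add: mu_def sum_distrib_left s_def)
      have sq: "s \<in> \<rat>" unfolding s_def using xl by simp
      have s1: "s \<le> 1" using s_def xl by simp
      have yin: "y \<in> {a..b}" using IH y_def by simp
      have "s * a \<le> s * y" "(1 - s) * a \<le> (1 - s) * x (Suc n)" "s * y \<le> s * b" "(1 - s) * x (Suc n) \<le> (1 - s) * b"
        using yin xl spos s1 by (auto intro: mult_left_mono)
      then have memb: "s * y + (1 - s) * x (Suc n) \<in> {a..b}" by (auto simp: algebra_simps)
      have "f (s * y + (1 - s) * x (Suc n)) \<le> s * f y + (1 - s) * f (x (Suc n))"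
        by (rule two_point[OF mid yin xl(1) sq]) (use spos s1 in auto)
      also have "\<dots> \<le> s * (\<Sum>i=1..n. mu i * f (x i)) + (1 - s) * f (x (Suc n))"
        using IH spos unfolding y_def by (simp add: mult_left_mono)
      finally show ?thesis using e1 e2 memb by simp
    qed
  qed
qed

lemma h_id:
  fixes h :: "real \<Rightarrow> real"
  assumes h_nonneg: "\<And>t. t \<ge> 0 \<Longrightarrow> h t \<ge> 0"
    and h_supermult: "\<And>u v. u \<ge> 0 \<Longrightarrow> v \<ge> 0 \<Longrightarrow> h (u * v) \<ge> h u * h v"
    and h_ge: "\<And>t. t \<ge> 0 \<Longrightarrow> h t \<ge> t"
    and t: "t \<ge> 0"
  shows "h t = t"
proof (cases "t = 0")
  case True
  have "h 0 \<ge> h 0 * h 2" using h_supermult[of 0 2] by simp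
  moreover have "h 0 * h 2 \<ge> h 0 * 2" using h_ge[of 2] h_nonneg[of 0] by (simp add: mult_left_mono)
  ultimately show ?thesis using True h_nonneg[of 0] by simp
next
  case False
  then have tp: "t > 0" using t by simp
  have h1: "h 1 \<le> 1"
  proof -
    have "h 1 \<ge> h 1 * h 1" using h_supermult[of 1 1] by simp
    moreover have "h 1 \<ge> 1" using h_ge[of 1] by simp
    ultimately show ?thesis by (metis mult_cancel_left1 mult_le_cancel_left2 order_trans linorder_not_le less_le_trans zero_less_one)
  qed
  have "h t * h (1/t) \<le> 1" using h_supermult[of t "1/t"] tp h1 by simp
  moreover have "h (1/t) \<ge> 1/t" using h_ge[of "1/t"] tp by simp
  moreover have "h t \<ge> t" using h_ge t by simp
  ultimately have "h t * (1/t) \<le> 1"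
    by (smt (verit, best) divide_pos_pos mult_left_mono tp)
  then have "h t \<le> t" using tp by (simp add: field_simps)
  then show ?thesis using h_ge t by (simp add: antisym)
qed

theorem theorem2p3:
  fixes h :: "real \<Rightarrow> real" and f :: "real \<Rightarrow> real" and a b :: real
    and n :: nat and x lam :: "nat \<Rightarrow> real"
  assumes h_nonneg: "\<And>t. t \<ge> 0 \<Longrightarrow> h t \<ge> 0"
    and h_supermult: "\<And>u v. u \<ge> 0 \<Longrightarrow> v \<ge> 0 \<Longrightarrow> h (u * v) \<ge> h u * h v"
    and h_ge: "\<And>t. t \<ge> 0 \<Longrightarrow> h t \<ge> t"
    and f_hmid: "\<And>u v. u \<in> {a..b} \<Longrightarrow> v \<in> {a..b} \<Longrightarrow>
                   f ((u + v) / 2) \<le> h (1/2) * (f u + f v)"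
    and x_in: "\<And>i. i \<in> {1..n} \<Longrightarrow> x i \<in> {a..b}"
    and lam_rat: "\<And>i. i \<in> {1..n} \<Longrightarrow> lam i \<in> \<rat>"
    and lam_range: "\<And>i. i \<in> {1..n} \<Longrightarrow> lam i \<in> {0..1}"
    and lam_sum: "(\<Sum>i=1..n. lam i) = 1"
  shows "f (\<Sum>i=1..n. lam i * x i) \<le> (\<Sum>i=1..n. h (lam i) * f (x i))"
proof -
  have hid: "\<And>t. t \<ge> 0 \<Longrightarrow> h t = t" using h_id[OF h_nonneg h_supermult h_ge] by blast
  have mid: "\<And>u v. u \<in> {a..b} \<Longrightarrow> v \<in> {a..b} \<Longrightarrow> f ((u + v) / 2) \<le> (f u + f v) / 2"
    using f_hmid hid[of "1/2"] by simp
  have "f (\<Sum>i=1..n. lam i * x i) \<le> (\<Sum>i=1..n. lam i * f (x i))"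
    using jensen_rat[OF mid, where n=n] x_in lam_rat lam_range lam_sum by auto
  also have "\<dots> = (\<Sum>i=1..n. h (lam i) * f (x i))"
    using lam_range hid by (intro sum.cong) auto
  finally show ?thesis .
qed

end
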